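(* For $n\geq 2$ let $h_n$ be the number of ordered pairs of words $(w,z)$ over the alphabet $\{A,B,C,D\}$ satisfying: (i) both $w$ and $z$ start with the letter $A$, and $|w|+|z|=n$; (ii) $w$ and $z$ contain the same number of letters $A$; (iii) neither $w$ nor $z$ contains a $CB$-factor (a letter $C$ immediately followed by a letter $B$); (iv) for all $i$, if the $i$th letter $A$ from the right in $w$ is immediately preceded by a $C$ and immediately followed by a $B$, then the $i$th segment of $z$ from the left contains a letter $B$. Let $H(x)=\sum_{n\geq 2}h_nx^n$. Then \[H(x)=\frac{x^2(1-2x)}{x^6-5x^5+14x^4-26x^3+22x^2-8x+1}.\]
   Context: A segment of a word $v$ over $\{A,B,C,D\}$ is a factor (consecutive letters) that starts with a letter $A$ and ends immediately before the next letter $A$, or at the end of $v$. The $i$th segment from the left is the one starting at the $i$th letter $A$ from the left. The words $w$ and $z$ need not have the same length. *)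

theory Defs
  imports "HOL-Computational_Algebra.Formal_Power_Series"
begin

datatype letter = A | B | C | D

definition apos :: "letter list \<Rightarrow> nat list" where
  "apos w = filter (\<lambda>i. w ! i = A) [0..<length w]"

text \<open>The (i+1)-th segment from the left (i is 0-indexed): starts at the (i+1)-th letter A
  and ends immediately before the next A, or at the end of the word.\<close>
definition segment :: "letter list \<Rightarrow> nat \<Rightarrow> letter list" where
  "segment z i = (let q = apos z ! i in z ! q # takeWhile (\<lambda>c. c \<noteq> A) (drop (Suc q) z))"

definition no_CB :: "letter list \<Rightarrow> bool" where
  "no_CB w = (\<forall>j. Suc j < length w \<longrightarrow> \<not> (w ! j = C \<and> w ! Suc j = B))"

text \<open>Condition (iv), with i 0-indexed: the (i+1)-th A from the right in w.\<close>
definition cond_iv :: "letter list \<Rightarrow> letter list \<Rightarrow> bool" where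
  "cond_iv w z = (\<forall>i < length (apos w).
     (let p = rev (apos w) ! i in
       (0 < p \<and> Suc p < length w \<and> w ! (p - 1) = C \<and> w ! Suc p = B)
         \<longrightarrow> B \<in> set (segment z i)))"

definition good_pair :: "nat \<Rightarrow> letter list \<Rightarrow> letter list \<Rightarrow> bool" where
  "good_pair n w z =
     (w \<noteq> [] \<and> hd w = A \<and> z \<noteq> [] \<and> hd z = A \<and> length w + length z = n
      \<and> count_list w A = count_list z A
      \<and> no_CB w \<and> no_CB z
      \<and> cond_iv w z)"

definition h :: "nat \<Rightarrow> nat" where
  "h n = card {(w, z). good_pair n w z}"

end

theory Submission
  imports Defs
begin
unbundle fps_syntax



definition gf :: "('a \<Rightarrow> nat) \<Rightarrow> 'a set \<Rightarrow> rat fps" where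
  "gf s S = Abs_fps (\<lambda>n. of_nat (card {x\<in>S. s x = n}))"

definition fin :: "('a \<Rightarrow> nat) \<Rightarrow> bool" where
  "fin s = (\<forall>n. finite {x. s x = n})"

lemma fin_slice: "fin s \<Longrightarrow> finite {x\<in>S. s x = n}"
  unfolding fin_def by (rule finite_subset[of _ "{x. s x = n}"]) auto

lemma gf_nth: "gf s S $ n = of_nat (card {x\<in>S. s x = n})"
  by (simp add: gf_def)

lemma gf_image:
  assumes "inj_on f S" "\<And>x. x \<in> S \<Longrightarrow> t (f x) = s x"
  shows "gf t (f ` S) = gf s S"
proof (rule fps_ext)
  fix n
  have "{y\<in>f ` S. t y = n} = f ` {x\<in>S. s x = n}" using assms(2) by auto
  moreover have "inj_on f {x\<in>S. s x = n}" using assms(1) by (rule inj_on_subset) auto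
  ultimately show "gf t (f ` S) $ n = gf s S $ n" by (simp add: gf_nth card_image)
qed

lemma gf_cong:
  assumes "\<And>x. x \<in> S \<Longrightarrow> t x = s x"
  shows "gf t S = gf s S"
  using gf_image[of id S t s] assms by simp

lemma gf_Un:
  assumes "fin s" "S \<inter> T = {}"
  shows "gf s (S \<union> T) = gf s S + gf s T"
proof (rule fps_ext)
  fix n
  have "{x\<in>S \<union> T. s x = n} = {x\<in>S. s x = n} \<union> {x\<in>T. s x = n}" by auto
  moreover have "card ({x\<in>S. s x = n} \<union> {x\<in>T. s x = n}) = card {x\<in>S. s x = n} + card {x\<in>T. s x = n}"
    by (rule card_Un_disjoint) (use assms fin_slice in auto)
  ultimately show "gf s (S \<union> T) $ n = (gf s S + gf s T) $ n" by (simp add: gf_nth)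
qed

lemma gf_split:
  assumes "fin s"
  shows "gf s S = gf s {x\<in>S. P x} + gf s {x\<in>S. \<not> P x}"
proof -
  have "S = {x\<in>S. P x} \<union> {x\<in>S. \<not> P x}" by auto
  then show ?thesis using gf_Un[OF assms, of "{x\<in>S. P x}" "{x\<in>S. \<not> P x}"] by auto
qed

lemma gf_times:
  assumes "fin s" "fin t"
  shows "gf (\<lambda>(x,y). s x + t y) (S \<times> T) = gf s S * gf t T"
proof (rule fps_ext)
  fix n
  have eq: "{p\<in>S \<times> T. (\<lambda>(x,y). s x + t y) p = n} =
     (\<Union>i\<in>{0..n}. {x\<in>S. s x = i} \<times> {y\<in>T. t y = n - i})" by auto
  have "card (\<Union>i\<in>{0..n}. {x\<in>S. s x = i} \<times> {y\<in>T. t y = n - i})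
      = (\<Sum>i=0..n. card ({x\<in>S. s x = i} \<times> {y\<in>T. t y = n - i}))"
    by (rule card_UN_disjoint) (use fin_slice[OF assms(1)] fin_slice[OF assms(2)] in \<open>auto intro!: finite_cartesian_product\<close>)
  also have "\<dots> = (\<Sum>i=0..n. card {x\<in>S. s x = i} * card {y\<in>T. t y = n - i})"
    by (simp add: card_cartesian_product)
  finally show "gf (\<lambda>(x,y). s x + t y) (S \<times> T) $ n = (gf s S * gf t T) $ n"
    by (simp add: gf_nth fps_mult_nth eq)
qed

lemma gf_shift:
  "gf (\<lambda>x. s x + k) S = fps_X ^ k * gf s S"
proof (rule fps_ext)
  fix n
  show "gf (\<lambda>x. s x + k) S $ n = (fps_X ^ k * gf s S) $ n"
  proof (cases "n < k")
    case True
    then have "{x\<in>S. s x + k = n} = {}" by auto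
    then show ?thesis using True by (simp add: gf_nth fps_X_power_mult_nth)
  next
    case False
    then have "{x\<in>S. s x + k = n} = {x\<in>S. s x = n - k}" by auto
    then show ?thesis using False by (simp add: gf_nth fps_X_power_mult_nth)
  qed
qed

lemma gf_single: "gf s {a} = fps_X ^ (s a)"
proof (rule fps_ext)
  fix n show "gf s {a} $ n = fps_X ^ (s a) $ n"
  proof (cases "s a = n")
    case True
    then have "{x\<in>{a}. s x = n} = {a}" by auto
    then show ?thesis using True by (simp add: gf_nth)
  qed (auto simp: gf_nth)
qed

lemma gf_empty: "gf s {} = 0"
  by (rule fps_ext) (simp add: gf_nth)




lemma letter_UNIV: "(UNIV :: letter set) = {A, B, C, D}"
  using letter.exhaust by auto

instance letter :: finite
  by standard (simp add: letter_UNIV)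

definition sB :: "letter list \<Rightarrow> bool" where "sB u = (u \<noteq> [] \<and> hd u = B)"
definition eC :: "letter list \<Rightarrow> bool" where "eC u = (u \<noteq> [] \<and> last u = C)"

lemma no_CB_Nil[simp]: "no_CB []" by (simp add: no_CB_def)

lemma no_CB_Cons: "no_CB (x # u) = (no_CB u \<and> \<not> (x = C \<and> sB u))"
proof
  assume h: "no_CB (x # u)"
  have "no_CB u" unfolding no_CB_def
  proof (intro allI impI)
    fix j assume "Suc j < length u"
    then show "\<not> (u ! j = C \<and> u ! Suc j = B)" using h[unfolded no_CB_def, rule_format, of "Suc j"] by simp
  qed
  moreover have "\<not> (x = C \<and> sB u)"
  proof
    assume "x = C \<and> sB u"
    then have "u \<noteq> []" "u ! 0 = B" by (auto simp: sB_def hd_conv_nth)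
    then show False using h[unfolded no_CB_def, rule_format, of 0] \<open>x = C \<and> sB u\<close> by simp
  qed
  ultimately show "no_CB u \<and> \<not> (x = C \<and> sB u)" by simp
next
  assume h: "no_CB u \<and> \<not> (x = C \<and> sB u)"
  show "no_CB (x # u)" unfolding no_CB_def
  proof (intro allI impI)
    fix j assume j: "Suc j < length (x # u)"
    show "\<not> ((x # u) ! j = C \<and> (x # u) ! Suc j = B)"
    proof (cases j)
      case 0
      then show ?thesis using h j by (auto simp: sB_def hd_conv_nth)
    next
      case (Suc i)
      then show ?thesis using h j unfolding no_CB_def by auto
    qed
  qed
qed

lemma no_CB_single[simp]: "no_CB [x]" by (simp add: no_CB_Cons sB_def)

lemma no_CB_append: "no_CB (u @ v) = (no_CB u \<and> no_CB v \<and> \<not> (eC u \<and> sB v))"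
proof (induction u)
  case Nil then show ?case by (simp add: eC_def)
next
  case (Cons x u)
  then show ?case by (cases "u = []") (auto simp: no_CB_Cons sB_def eC_def)
qed

definition WW :: "letter list set" where "WW = {u. A \<notin> set u \<and> no_CB u}"
definition NN :: "letter list set" where "NN = {u. set u \<subseteq> {C, D}}"

lemma fin_length: "fin (length :: letter list \<Rightarrow> nat)"
  unfolding fin_def using finite_lists_length_eq[of "UNIV :: letter set"] by simp

lemma gf_cons: "gf length (Cons c ` S) = fps_X * gf length S"
proof -
  have "gf length (Cons c ` S) = gf (\<lambda>v. length v + 1) S"
    by (rule gf_image) auto
  then show ?thesis using gf_shift[of length 1 S] by simp
qed

lemma gf_snoc: "gf length ((\<lambda>v. v @ [c]) ` S) = fps_X * gf length S"
proof -
  have "gf length ((\<lambda>v. v @ [c]) ` S) = gf (\<lambda>v. length v + 1) S"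
    by (rule gf_image) (auto simp: inj_on_def)
  then show ?thesis using gf_shift[of length 1 S] by simp
qed

lemma gf_cons_snoc: "gf length ((\<lambda>v. B # v @ [C]) ` S) = fps_X ^ 2 * gf length S"
proof -
  have "gf length ((\<lambda>v. B # v @ [C]) ` S) = gf (\<lambda>v. length v + 2) S"
    by (rule gf_image) (auto simp: inj_on_def)
  then show ?thesis using gf_shift[of length 2 S] by simp
qed

lemma gf_nil: "gf length {[]} = 1"
  using gf_single[of length "[]"] by simp

lemma SB_eq: "{v\<in>WW. sB v} = Cons B ` WW"
proof (intro set_eqI iffI)
  fix u assume u: "u \<in> {v\<in>WW. sB v}"
  then obtain v where v: "u = B # v" by (cases u) (auto simp: sB_def)
  then have "v \<in> WW" using u by (simp add: WW_def no_CB_Cons)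
  then show "u \<in> Cons B ` WW" using v by blast
next
  fix u assume "u \<in> Cons B ` WW"
  then obtain v where "v \<in> WW" "u = B # v" by blast
  then show "u \<in> {v\<in>WW. sB v}" by (simp add: WW_def no_CB_Cons sB_def)
qed

lemma EC_eq: "{v\<in>WW. eC v} = (\<lambda>v. v @ [C]) ` WW"
proof (intro set_eqI iffI)
  fix u assume u: "u \<in> {v\<in>WW. eC v}"
  then have e: "u = butlast u @ [C]" by (metis append_butlast_last_id eC_def mem_Collect_eq)
  have "no_CB (butlast u)" using u e no_CB_append[of "butlast u" "[C]"] by (simp add: WW_def)
  moreover have "A \<notin> set (butlast u)" using u by (auto simp: WW_def dest: in_set_butlastD)
  ultimately have "butlast u \<in> WW" by (simp add: WW_def)
  then show "u \<in> (\<lambda>v. v @ [C]) ` WW" using e by blast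
next
  fix u assume "u \<in> (\<lambda>v. v @ [C]) ` WW"
  then obtain v where "v \<in> WW" "u = v @ [C]" by blast
  then show "u \<in> {v\<in>WW. eC v}" by (simp add: WW_def no_CB_append sB_def eC_def)
qed

lemma SBEC_eq: "{v\<in>WW. sB v \<and> eC v} = (\<lambda>v. B # v @ [C]) ` WW"
proof (intro set_eqI iffI)
  fix u assume u: "u \<in> {v\<in>WW. sB v \<and> eC v}"
  then obtain v where v: "u = B # v" by (cases u) (auto simp: sB_def)
  then have "v \<noteq> []" using u by (auto simp: eC_def)
  then have e: "v = butlast v @ [C]" using u v by (metis append_butlast_last_id eC_def last_ConsR mem_Collect_eq)
  have "no_CB v" using u v by (simp add: WW_def no_CB_Cons)
  then have "no_CB (butlast v)" using e no_CB_append[of "butlast v" "[C]"] by simp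
  moreover have "A \<notin> set (butlast v)" using u v by (auto simp: WW_def dest: in_set_butlastD)
  ultimately have "butlast v \<in> WW" by (simp add: WW_def)
  then show "u \<in> (\<lambda>v. B # v @ [C]) ` WW" using e v by blast
next
  fix u assume "u \<in> (\<lambda>v. B # v @ [C]) ` WW"
  then obtain v where "v \<in> WW" "u = B # v @ [C]" by blast
  then show "u \<in> {v\<in>WW. sB v \<and> eC v}" by (simp add: WW_def no_CB_append no_CB_Cons sB_def eC_def)
qed

lemma WW_decomp: "WW = {[]} \<union> Cons B ` WW \<union> Cons D ` WW \<union> Cons C ` {v\<in>WW. \<not> sB v}"
proof (intro set_eqI iffI)
  fix u assume u: "u \<in> WW"
  show "u \<in> {[]} \<union> Cons B ` WW \<union> Cons D ` WW \<union> Cons C ` {v\<in>WW. \<not> sB v}"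
  proof (cases u)
    case (Cons x v)
    then have v: "v \<in> WW" "x \<noteq> A" "\<not> (x = C \<and> sB v)" using u by (auto simp: WW_def no_CB_Cons)
    show ?thesis
    proof (cases x)
      case B then show ?thesis using Cons v by blast
    next
      case C then show ?thesis using Cons v by blast
    next
      case D then show ?thesis using Cons v by blast
    qed (use v in simp)
  qed simp
next
  fix u assume "u \<in> {[]} \<union> Cons B ` WW \<union> Cons D ` WW \<union> Cons C ` {v\<in>WW. \<not> sB v}"
  then show "u \<in> WW" by (elim UnE imageE) (auto simp: WW_def no_CB_Cons)
qed

lemma NN_decomp: "NN = {[]} \<union> Cons C ` NN \<union> Cons D ` NN"
proof (intro set_eqI iffI)
  fix u assume u: "u \<in> NN"
  show "u \<in> {[]} \<union> Cons C ` NN \<union> Cons D ` NN"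
  proof (cases u)
    case (Cons x v)
    then have "v \<in> NN" "x = C \<or> x = D" using u by (auto simp: NN_def)
    then show ?thesis using Cons by blast
  qed simp
next
  fix u assume "u \<in> {[]} \<union> Cons C ` NN \<union> Cons D ` NN"
  then show "u \<in> NN" by (elim UnE imageE) (auto simp: NN_def)
qed

lemma NN_eq: "{t\<in>WW. B \<notin> set t} = NN"
proof (intro set_eqI iffI)
  fix u assume u: "u \<in> {t\<in>WW. B \<notin> set t}"
  have "set u \<subseteq> {C, D}"
  proof
    fix x assume "x \<in> set u"
    then have "x \<noteq> A" "x \<noteq> B" using u by (auto simp: WW_def)
    then show "x \<in> {C, D}" by (cases x) auto
  qed
  then show "u \<in> NN" by (simp add: NN_def)
next
  fix u assume u: "u \<in> NN"
  then have "no_CB u" unfolding no_CB_def NN_def by (auto dest!: nth_mem)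
  then show "u \<in> {t\<in>WW. B \<notin> set t}" using u by (auto simp: WW_def NN_def)
qed

definition Wf :: "rat fps" where "Wf = gf length WW"
definition Nf :: "rat fps" where "Nf = gf length NN"

lemma gf_SB: "gf length {v\<in>WW. sB v} = fps_X * Wf"
  by (simp add: SB_eq gf_cons Wf_def)
lemma gf_EC: "gf length {v\<in>WW. eC v} = fps_X * Wf"
  by (simp add: EC_eq gf_snoc Wf_def)
lemma gf_SBEC: "gf length {v\<in>WW. sB v \<and> eC v} = fps_X ^ 2 * Wf"
  by (simp add: SBEC_eq gf_cons_snoc Wf_def)
lemma gf_NSB: "gf length {v\<in>WW. \<not> sB v} = Wf - fps_X * Wf"
  using gf_split[OF fin_length, of WW sB] gf_SB unfolding Wf_def by (metis add_diff_cancel_left')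
lemma gf_NEC: "gf length {v\<in>WW. \<not> eC v} = Wf - fps_X * Wf"
  using gf_split[OF fin_length, of WW eC] gf_EC unfolding Wf_def by (metis add_diff_cancel_left')
lemma gf_SBNEC: "gf length {v\<in>WW. sB v \<and> \<not> eC v} = fps_X * Wf - fps_X ^ 2 * Wf"
proof -
  have "gf length {v\<in>WW. sB v} = gf length {v\<in>{v\<in>WW. sB v}. eC v} + gf length {v\<in>{v\<in>WW. sB v}. \<not> eC v}"
    by (rule gf_split[OF fin_length])
  moreover have "{v\<in>{v\<in>WW. sB v}. eC v} = {v\<in>WW. sB v \<and> eC v}" by auto
  moreover have "{v\<in>{v\<in>WW. sB v}. \<not> eC v} = {v\<in>WW. sB v \<and> \<not> eC v}" by auto
  ultimately show ?thesis using gf_SB gf_SBEC by simp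
qed

lemma Wf_eq: "Wf * (1 - 3 * fps_X + fps_X ^ 2) = 1"
proof -
  have "Wf = gf length {[]::letter list} + gf length (Cons B ` WW) + gf length (Cons D ` WW) + gf length (Cons C ` {v\<in>WW. \<not> sB v})"
    unfolding Wf_def
    apply (subst WW_decomp)
    apply (subst gf_Un[OF fin_length], force)+
    apply simp
    done
  also have "\<dots> = 1 + fps_X * Wf + fps_X * Wf + fps_X * (Wf - fps_X * Wf)"
    by (simp add: gf_nil gf_cons gf_NSB Wf_def)
  finally show ?thesis by (simp add: algebra_simps power2_eq_square)
qed

lemma Nf_eq: "Nf * (1 - 2 * fps_X) = 1"
proof -
  have "Nf = gf length {[]::letter list} + gf length (Cons C ` NN) + gf length (Cons D ` NN)"
    unfolding Nf_def
    apply (subst NN_decomp)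
    apply (subst gf_Un[OF fin_length], force)+
    apply simp
    done
  also have "\<dots> = 1 + fps_X * Nf + fps_X * Nf"
    by (simp add: gf_nil gf_cons Nf_def)
  finally show ?thesis by (simp add: algebra_simps)
qed




type_synonym blk = "letter list \<times> letter list"

definition bsz :: "blk \<Rightarrow> nat" where "bsz b = length (fst b) + length (snd b) + 2"
definition lsz :: "blk list \<Rightarrow> nat" where "lsz bs = sum_list (map bsz bs)"
definition forb :: "blk \<Rightarrow> bool" where "forb b = (sB (fst b) \<and> B \<notin> set (snd b))"
definition BB :: "blk set" where "BB = WW \<times> WW"
definition okc :: "blk list \<Rightarrow> bool" where
  "okc bs = (\<forall>i. Suc i < length bs \<longrightarrow> \<not> (forb (bs ! i) \<and> eC (fst (bs ! Suc i))))"
definition VP :: "blk list set" where "VP = {bs. bs \<noteq> [] \<and> set bs \<subseteq> BB \<and> okc bs}"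
definition VQ :: "blk list set" where "VQ = {bs\<in>VP. \<not> eC (fst (hd bs))}"

lemma fin_bsz_le: "finite {b. bsz b \<le> n}"
proof -
  have "{b. bsz b \<le> n} \<subseteq> {u::letter list. set u \<subseteq> UNIV \<and> length u \<le> n} \<times> {u::letter list. set u \<subseteq> UNIV \<and> length u \<le> n}"
    by (auto simp: bsz_def)
  moreover have "finite ({u::letter list. set u \<subseteq> UNIV \<and> length u \<le> n} \<times> {u::letter list. set u \<subseteq> UNIV \<and> length u \<le> n})"
    using finite_lists_length_le[of "UNIV :: letter set" n] by simp
  ultimately show ?thesis by (rule finite_subset)
qed

lemma fin_bsz: "fin bsz"
  unfolding fin_def using fin_bsz_le by (metis (mono_tags) eq_imp_le finite_subset mem_Collect_eq subsetI)

lemma length_le_lsz: "length bs \<le> lsz bs"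
  by (induction bs) (auto simp: lsz_def bsz_def)

lemma fin_lsz: "fin lsz"
  unfolding fin_def
proof
  fix n
  have "{bs. lsz bs = n} \<subseteq> {bs. set bs \<subseteq> {b. bsz b \<le> n} \<and> length bs \<le> n}"
  proof (safe)
    fix bs :: "blk list" and b assume "b \<in> set bs"
    then have "bsz b \<le> sum_list (map bsz bs)" by (simp add: member_le_sum_list)
    then show "bsz b \<le> lsz bs" by (simp add: lsz_def)
  qed (use length_le_lsz in auto)
  then show "finite {bs. lsz bs = n}"
    using finite_lists_length_le[OF fin_bsz_le] finite_subset by blast
qed

lemma gf_block: "gf bsz (S \<times> T) = fps_X ^ 2 * gf length S * gf length T"
proof -
  have "gf bsz (S \<times> T) = gf (\<lambda>p. (\<lambda>(x,y). length x + length y) p + 2) (S \<times> T)"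
    by (rule gf_cong) (auto simp: bsz_def)
  also have "\<dots> = fps_X ^ 2 * gf (\<lambda>(x,y). length x + length y) (S \<times> T)" by (rule gf_shift)
  also have "\<dots> = fps_X ^ 2 * (gf length S * gf length T)" by (simp add: gf_times fin_length)
  finally show ?thesis by (simp add: mult.assoc)
qed

lemma gf_singl: "gf lsz ((\<lambda>b. [b]) ` S) = gf bsz S"
  by (rule gf_image) (auto simp: lsz_def inj_on_def)

lemma gf_consl: "gf lsz ((\<lambda>(b,r). b # r) ` (S \<times> T)) = gf bsz S * gf lsz T"
proof -
  have "gf lsz ((\<lambda>(b,r). b # r) ` (S \<times> T)) = gf (\<lambda>(x,y). bsz x + lsz y) (S \<times> T)"
    by (rule gf_image) (auto simp: inj_on_def lsz_def)
  then show ?thesis by (simp add: gf_times fin_bsz fin_lsz)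
qed

lemma okc_Cons: "okc (b # r) = (okc r \<and> (r \<noteq> [] \<longrightarrow> \<not> (forb b \<and> eC (fst (hd r)))))"
proof
  assume h: "okc (b # r)"
  have "okc r" unfolding okc_def
  proof (intro allI impI)
    fix i assume "Suc i < length r"
    then show "\<not> (forb (r ! i) \<and> eC (fst (r ! Suc i)))" using h[unfolded okc_def, rule_format, of "Suc i"] by simp
  qed
  moreover have "r \<noteq> [] \<longrightarrow> \<not> (forb b \<and> eC (fst (hd r)))"
    using h[unfolded okc_def, rule_format, of 0] by (auto simp: hd_conv_nth)
  ultimately show "okc r \<and> (r \<noteq> [] \<longrightarrow> \<not> (forb b \<and> eC (fst (hd r))))" by simp
next
  assume h: "okc r \<and> (r \<noteq> [] \<longrightarrow> \<not> (forb b \<and> eC (fst (hd r))))"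
  show "okc (b # r)" unfolding okc_def
  proof (intro allI impI)
    fix i assume i: "Suc i < length (b # r)"
    show "\<not> (forb ((b # r) ! i) \<and> eC (fst ((b # r) ! Suc i)))"
    proof (cases i)
      case 0
      then show ?thesis using h i by (auto simp: hd_conv_nth)
    next
      case (Suc j)
      then show ?thesis using h i unfolding okc_def by auto
    qed
  qed
qed

lemma okc_single[simp]: "okc [b]" by (simp add: okc_def)

lemma in_cons_img: "(b,r) \<in> X \<Longrightarrow> b # r \<in> (\<lambda>(b,r). b # r) ` X"
  by (rule image_eqI[where x="(b,r)"]) auto

lemma VP_cons: "b \<in> BB \<Longrightarrow> r \<in> VP \<Longrightarrow> \<not> (forb b \<and> eC (fst (hd r))) \<Longrightarrow> b # r \<in> VP"
  by (auto simp: VP_def okc_Cons)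

lemma VP_decomp: "VP = (\<lambda>b. [b]) ` BB \<union> (\<lambda>(b,r). b # r) ` ({b\<in>BB. \<not> forb b} \<times> VP)
   \<union> (\<lambda>(b,r). b # r) ` ({b\<in>BB. forb b} \<times> VQ)"
proof (intro set_eqI iffI)
  fix bs assume h: "bs \<in> VP"
  then obtain b r where bs: "bs = b # r" unfolding VP_def by (cases bs) auto
  show "bs \<in> (\<lambda>b. [b]) ` BB \<union> (\<lambda>(b,r). b # r) ` ({b\<in>BB. \<not> forb b} \<times> VP)
   \<union> (\<lambda>(b,r). b # r) ` ({b\<in>BB. forb b} \<times> VQ)"
  proof (cases "r = []")
    case True then show ?thesis using h bs by (auto simp: VP_def)
  next
    case False
    then have r: "r \<in> VP" "b \<in> BB" "r \<noteq> [] \<longrightarrow> \<not> (forb b \<and> eC (fst (hd r)))"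
      using h bs by (auto simp: VP_def okc_Cons)
    show ?thesis
    proof (cases "forb b")
      case True
      then have "r \<in> VQ" using r False by (simp add: VQ_def)
      then have "(b, r) \<in> {b\<in>BB. forb b} \<times> VQ" using True r by simp
      then show ?thesis unfolding bs by (intro UnI2 in_cons_img)
    next
      case fb: False
      then have "(b, r) \<in> {b\<in>BB. \<not> forb b} \<times> VP" using r by simp
      then show ?thesis unfolding bs by (intro UnI1 UnI2 in_cons_img)
    qed
  qed
next
  fix bs assume "bs \<in> (\<lambda>b. [b]) ` BB \<union> (\<lambda>(b,r). b # r) ` ({b\<in>BB. \<not> forb b} \<times> VP)
   \<union> (\<lambda>(b,r). b # r) ` ({b\<in>BB. forb b} \<times> VQ)"
  then consider (a) b where "b \<in> BB" "bs = [b]"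
    | (b) b r where "b \<in> BB" "\<not> forb b" "r \<in> VP" "bs = b # r"
    | (c) b r where "b \<in> BB" "forb b" "r \<in> VQ" "bs = b # r" by (elim UnE imageE SigmaE) auto
  then show "bs \<in> VP"
  proof cases
    case a then show ?thesis by (simp add: VP_def)
  next
    case b then show ?thesis using VP_cons by blast
  next
    case c then show ?thesis using VP_cons by (simp add: VQ_def)
  qed
qed

lemma VQ_decomp: "VQ = (\<lambda>b. [b]) ` {b\<in>BB. \<not> eC (fst b)}
   \<union> (\<lambda>(b,r). b # r) ` ({b\<in>{b\<in>BB. \<not> eC (fst b)}. \<not> forb b} \<times> VP)
   \<union> (\<lambda>(b,r). b # r) ` ({b\<in>{b\<in>BB. \<not> eC (fst b)}. forb b} \<times> VQ)"
proof (intro set_eqI iffI)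
  fix bs assume h: "bs \<in> VQ"
  then obtain b r where bs: "bs = b # r" unfolding VQ_def VP_def by (cases bs) auto
  have nb: "\<not> eC (fst b)" using h bs by (simp add: VQ_def)
  show "bs \<in> (\<lambda>b. [b]) ` {b\<in>BB. \<not> eC (fst b)}
   \<union> (\<lambda>(b,r). b # r) ` ({b\<in>{b\<in>BB. \<not> eC (fst b)}. \<not> forb b} \<times> VP)
   \<union> (\<lambda>(b,r). b # r) ` ({b\<in>{b\<in>BB. \<not> eC (fst b)}. forb b} \<times> VQ)"
  proof (cases "r = []")
    case True
    have "b \<in> {b\<in>BB. \<not> eC (fst b)}" using h bs nb by (simp add: VQ_def VP_def)
    then show ?thesis unfolding bs True by (intro UnI1 imageI)
  next
    case False
    then have r: "r \<in> VP" "b \<in> BB" "r \<noteq> [] \<longrightarrow> \<not> (forb b \<and> eC (fst (hd r)))"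
      using h bs by (auto simp: VQ_def VP_def okc_Cons)
    show ?thesis
    proof (cases "forb b")
      case True
      then have "r \<in> VQ" using r False by (simp add: VQ_def)
      then have "(b, r) \<in> {b\<in>{b\<in>BB. \<not> eC (fst b)}. forb b} \<times> VQ" using True r nb by simp
      then show ?thesis unfolding bs by (intro UnI2 in_cons_img)
    next
      case fb: False
      then have "(b, r) \<in> {b\<in>{b\<in>BB. \<not> eC (fst b)}. \<not> forb b} \<times> VP" using r nb by simp
      then show ?thesis unfolding bs by (intro UnI1 UnI2 in_cons_img)
    qed
  qed
next
  fix bs assume "bs \<in> (\<lambda>b. [b]) ` {b\<in>BB. \<not> eC (fst b)}
   \<union> (\<lambda>(b,r). b # r) ` ({b\<in>{b\<in>BB. \<not> eC (fst b)}. \<not> forb b} \<times> VP)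
   \<union> (\<lambda>(b,r). b # r) ` ({b\<in>{b\<in>BB. \<not> eC (fst b)}. forb b} \<times> VQ)"
  then show "bs \<in> VQ"
  proof (elim UnE)
    assume "bs \<in> (\<lambda>b. [b]) ` {b\<in>BB. \<not> eC (fst b)}"
    then obtain b where "b \<in> BB" "\<not> eC (fst b)" "bs = [b]" by auto
    then show ?thesis by (simp add: VP_def VQ_def)
  next
    assume "bs \<in> (\<lambda>(b,r). b # r) ` ({b\<in>{b\<in>BB. \<not> eC (fst b)}. \<not> forb b} \<times> VP)"
    then obtain b r where b: "b \<in> BB" "\<not> eC (fst b)" "\<not> forb b" "r \<in> VP" "bs = b # r" by auto
    have "b # r \<in> VP" by (rule VP_cons) (use b in auto)
    then show ?thesis using b by (simp add: VQ_def)
  next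
    assume "bs \<in> (\<lambda>(b,r). b # r) ` ({b\<in>{b\<in>BB. \<not> eC (fst b)}. forb b} \<times> VQ)"
    then obtain b r where c: "b \<in> BB" "\<not> eC (fst b)" "forb b" "r \<in> VQ" "bs = b # r" by auto
    have "b # r \<in> VP" by (rule VP_cons) (use c in \<open>auto simp: VQ_def\<close>)
    then show ?thesis using c by (simp add: VQ_def)
  qed
qed

definition Pf :: "rat fps" where "Pf = gf lsz VP"
definition Qf :: "rat fps" where "Qf = gf lsz VQ"

lemma FB_eq: "{b\<in>BB. forb b} = {v\<in>WW. sB v} \<times> NN"
  unfolding NN_eq[symmetric] BB_def forb_def by fastforce
lemma NEB_eq: "{b\<in>BB. \<not> eC (fst b)} = {v\<in>WW. \<not> eC v} \<times> WW"
  unfolding BB_def by fastforce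
lemma NEFB_eq: "{b\<in>{b\<in>BB. \<not> eC (fst b)}. forb b} = {v\<in>WW. sB v \<and> \<not> eC v} \<times> NN"
  unfolding NN_eq[symmetric] BB_def forb_def by fastforce

lemma gf_E: "gf bsz BB = fps_X^2 * Wf * Wf"
  by (simp add: BB_def gf_block Wf_def)
lemma gf_F: "gf bsz {b\<in>BB. forb b} = fps_X^2 * (fps_X * Wf) * Nf"
  unfolding FB_eq by (simp add: gf_block gf_SB Nf_def)
lemma gf_E1: "gf bsz {b\<in>BB. \<not> eC (fst b)} = fps_X^2 * (Wf - fps_X * Wf) * Wf"
  unfolding NEB_eq by (simp add: gf_block gf_NEC Wf_def)
lemma gf_F1: "gf bsz {b\<in>{b\<in>BB. \<not> eC (fst b)}. forb b} = fps_X^2 * (fps_X * Wf - fps_X^2 * Wf) * Nf"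
  unfolding NEFB_eq by (simp add: gf_block gf_SBNEC Nf_def)

lemma gf_split_eq: "gf bsz {b\<in>S. \<not> P b} = gf bsz S - gf bsz {b\<in>S. P b}"
  using gf_split[OF fin_bsz, of S P] by simp

lemma disj1: "(\<lambda>b. [b]) ` X \<inter> (\<lambda>(b,r). b # r) ` (Y \<times> Z) = {}" if "[] \<notin> Z" for X Y Z
  using that by auto
lemma disj2: "((\<lambda>b. [b]) ` X \<union> (\<lambda>(b,r). b # r) ` ({b\<in>Y. \<not> forb b} \<times> Z)) \<inter> (\<lambda>(b,r). b # r) ` ({b\<in>Y. forb b} \<times> Z') = {}"
  if "[] \<notin> Z'" for X Y Z Z'
  using that by auto

lemma Pf_eq: "Pf = fps_X^2 * Wf * Wf + (fps_X^2 * Wf * Wf - fps_X^2 * (fps_X * Wf) * Nf) * Pf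
   + fps_X^2 * (fps_X * Wf) * Nf * Qf"
proof -
  have nP: "[] \<notin> VP" and nQ: "[] \<notin> VQ" by (auto simp: VP_def VQ_def)
  have "Pf = gf lsz ((\<lambda>b. [b]) ` BB) + gf lsz ((\<lambda>(b,r). b # r) ` ({b\<in>BB. \<not> forb b} \<times> VP))
    + gf lsz ((\<lambda>(b,r). b # r) ` ({b\<in>BB. forb b} \<times> VQ))"
    unfolding Pf_def
    apply (subst VP_decomp)
    apply (subst gf_Un[OF fin_lsz disj2[OF nQ]])
    apply (subst gf_Un[OF fin_lsz disj1[OF nP]])
    apply (rule refl)
    done
  then show ?thesis
    by (simp add: gf_singl gf_consl gf_split_eq gf_E gf_F Pf_def[symmetric] Qf_def[symmetric])
qed

lemma Qf_eq: "Qf = fps_X^2 * (Wf - fps_X * Wf) * Wf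
   + (fps_X^2 * (Wf - fps_X * Wf) * Wf - fps_X^2 * (fps_X * Wf - fps_X^2 * Wf) * Nf) * Pf
   + fps_X^2 * (fps_X * Wf - fps_X^2 * Wf) * Nf * Qf"
proof -
  have nP: "[] \<notin> VP" and nQ: "[] \<notin> VQ" by (auto simp: VP_def VQ_def)
  have "Qf = gf lsz ((\<lambda>b. [b]) ` {b\<in>BB. \<not> eC (fst b)})
    + gf lsz ((\<lambda>(b,r). b # r) ` ({b\<in>{b\<in>BB. \<not> eC (fst b)}. \<not> forb b} \<times> VP))
    + gf lsz ((\<lambda>(b,r). b # r) ` ({b\<in>{b\<in>BB. \<not> eC (fst b)}. forb b} \<times> VQ))"
    unfolding Qf_def
    apply (subst VQ_decomp)
    apply (subst gf_Un[OF fin_lsz disj2[OF nQ]])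
    apply (subst gf_Un[OF fin_lsz disj1[OF nP]])
    apply (rule refl)
    done
  also have "\<dots> = gf bsz {b\<in>BB. \<not> eC (fst b)} + (gf bsz {b\<in>BB. \<not> eC (fst b)} - gf bsz {b\<in>{b\<in>BB. \<not> eC (fst b)}. forb b}) * Pf
     + gf bsz {b\<in>{b\<in>BB. \<not> eC (fst b)}. forb b} * Qf"
    unfolding gf_singl gf_consl gf_split_eq[of "{b\<in>BB. \<not> eC (fst b)}"] Pf_def[symmetric] Qf_def[symmetric] by (rule refl)
  finally show ?thesis unfolding gf_E1 gf_F1 .
qed




definition enc :: "letter list list \<Rightarrow> letter list" where
  "enc us = concat (map (\<lambda>u. A # u) us)"

definition AF :: "letter list list \<Rightarrow> bool" where
  "AF us = (\<forall>u\<in>set us. A \<notin> set u)"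

lemma enc_Nil[simp]: "enc [] = []" by (simp add: enc_def)
lemma enc_Cons[simp]: "enc (u # us) = A # u @ enc us" by (simp add: enc_def)
lemma enc_append: "enc (xs @ ys) = enc xs @ enc ys" by (simp add: enc_def)
lemma enc_eq_Nil[simp]: "(enc us = []) = (us = [])" by (cases us) auto
lemma enc_start: "enc vs = [] \<or> hd (enc vs) = A" by (cases vs) auto

lemma AF_Cons[simp]: "AF (u # us) = (A \<notin> set u \<and> AF us)" by (simp add: AF_def)
lemma AF_Nil[simp]: "AF []" by (simp add: AF_def)

lemma count_enc: "AF us \<Longrightarrow> count_list (enc us) A = length us"
  by (induction us) (auto simp: count_list_0_iff)

lemma takeWhile_enc: "takeWhile (\<lambda>c. c \<noteq> A) (enc vs) = []"
  by (cases vs) auto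

lemma takeWhile_u_enc: "A \<notin> set u \<Longrightarrow> takeWhile (\<lambda>c. c \<noteq> A) (u @ enc vs) = u"
  by (subst takeWhile_append2) (auto simp: takeWhile_enc)

lemma enc_inj: "AF us \<Longrightarrow> AF vs \<Longrightarrow> enc us = enc vs \<Longrightarrow> us = vs"
proof (induction us arbitrary: vs)
  case Nil then show ?case by (metis enc_eq_Nil)
next
  case (Cons u us)
  then obtain v vs' where vs: "vs = v # vs'" by (cases vs) auto
  have e: "u @ enc us = v @ enc vs'" using Cons.prems vs by simp
  have "u = v" using takeWhile_u_enc[of u us] takeWhile_u_enc[of v vs'] e Cons.prems vs by simp
  then have "enc us = enc vs'" using e by simp
  then show ?case using Cons vs \<open>u = v\<close> by simp
qed

lemma enc_surj: "w \<noteq> [] \<Longrightarrow> hd w = A \<Longrightarrow> \<exists>us. AF us \<and> w = enc us"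
proof (induction "length w" arbitrary: w rule: less_induct)
  case less
  obtain rest where w: "w = A # rest" using less.prems by (cases w) auto
  define u where "u = takeWhile (\<lambda>c. c \<noteq> A) rest"
  define r where "r = dropWhile (\<lambda>c. c \<noteq> A) rest"
  have rest: "rest = u @ r" by (simp add: u_def r_def)
  have uA: "A \<notin> set u" unfolding u_def by (metis (mono_tags) set_takeWhileD)
  show ?case
  proof (cases "r = []")
    case True
    then show ?thesis using w rest uA by (intro exI[of _ "[u]"]) simp
  next
    case False
    then have "hd r = A" unfolding r_def by (metis (mono_tags) hd_dropWhile)
    moreover have "length r < length w" using w rest by simp
    ultimately obtain vs where "AF vs" "r = enc vs" using less.hyps False by blast
    then show ?thesis using w rest uA by (intro exI[of _ "u # vs"]) simp
  qed
qed

lemma no_CB_A: "no_CB (A # x) = no_CB x" by (simp add: no_CB_Cons)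

lemma sB_enc: "\<not> sB (enc vs)" using enc_start[of vs] by (auto simp: sB_def)

lemma no_CB_enc: "no_CB (enc us) = (\<forall>u\<in>set us. no_CB u)"
  by (induction us) (auto simp: no_CB_A no_CB_append sB_enc)

lemma apos_append: "apos (xs @ ys) = apos xs @ map (\<lambda>i. i + length xs) (apos ys)"
proof -
  have "[0..<length (xs @ ys)] = [0..<length xs] @ map (\<lambda>i. i + length xs) [0..<length ys]"
    by (simp add: map_add_upt upt_add_eq_append[of 0 "length xs"] add.commute)
  then have "apos (xs @ ys) = filter (\<lambda>i. (xs @ ys) ! i = A) [0..<length xs]
     @ map (\<lambda>i. i + length xs) (filter (\<lambda>i. (xs @ ys) ! (i + length xs) = A) [0..<length ys])"
    by (simp add: apos_def filter_map o_def)
  also have "filter (\<lambda>i. (xs @ ys) ! i = A) [0..<length xs] = apos xs"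
    unfolding apos_def by (rule filter_cong) (auto simp: nth_append)
  also have "filter (\<lambda>i. (xs @ ys) ! (i + length xs) = A) [0..<length ys] = apos ys"
    unfolding apos_def by (rule filter_cong) (auto simp: nth_append)
  finally show ?thesis .
qed

lemma apos_free: "A \<notin> set u \<Longrightarrow> apos u = []"
  unfolding apos_def by (auto simp: filter_empty_conv) (metis nth_mem)

lemma apos_A: "apos [A] = [0]" by (simp add: apos_def)

lemma apos_enc_Cons:
  assumes "A \<notin> set u" shows "apos (A # u @ enc us) = 0 # map (\<lambda>i. i + Suc (length u)) (apos (enc us))"
proof -
  have "A # u @ enc us = ([A] @ u) @ enc us" by simp
  then show ?thesis
    by (simp only: apos_append apos_free[OF assms] apos_A) simp
qed

lemma length_apos_enc: "AF us \<Longrightarrow> length (apos (enc us)) = length us"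
proof (induction us)
  case Nil then show ?case by (simp add: apos_def)
next
  case (Cons u us) then show ?case by (simp add: apos_enc_Cons)
qed

lemma apos_enc_nth: "AF us \<Longrightarrow> j < length us \<Longrightarrow> apos (enc us) ! j = length (enc (take j us))"
proof (induction us arbitrary: j)
  case Nil then show ?case by simp
next
  case (Cons u us)
  show ?case
  proof (cases j)
    case 0 then show ?thesis using Cons by (simp add: apos_enc_Cons)
  next
    case (Suc j')
    then have "j' < length us" using Cons by simp
    then show ?thesis using Cons Suc by (simp add: apos_enc_Cons length_apos_enc)
  qed
qed

lemma enc_split: "j < length us \<Longrightarrow> enc us = enc (take j us) @ A # (us ! j @ enc (drop (Suc j) us))"
proof -
  assume j: "j < length us"
  have "enc us = enc (take j us @ us ! j # drop (Suc j) us)" using id_take_nth_drop[OF j] by simp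
  then show ?thesis by (simp add: enc_append)
qed

lemma segment_enc: "AF ts \<Longrightarrow> m < length ts \<Longrightarrow> segment (enc ts) m = A # ts ! m"
proof -
  assume af: "AF ts" and m: "m < length ts"
  define L where "L = length (enc (take m ts))"
  have z: "enc ts = enc (take m ts) @ A # (ts ! m @ enc (drop (Suc m) ts))" by (rule enc_split[OF m])
  have q: "apos (enc ts) ! m = L" using apos_enc_nth[OF af m] by (simp add: L_def)
  have "enc ts ! L = A" using z by (metis L_def nth_append_length)
  moreover have "drop (Suc L) (enc ts) = ts ! m @ enc (drop (Suc m) ts)" using z by (simp add: L_def)
  moreover have "A \<notin> set (ts ! m)" using af m by (simp add: AF_def)
  ultimately show ?thesis unfolding segment_def Let_def q by (simp add: takeWhile_u_enc)
qed

lemma last_enc: "us \<noteq> [] \<Longrightarrow> last (enc us) = (if last us = [] then A else last (last us))"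
proof -
  assume "us \<noteq> []"
  then have "us = butlast us @ [last us]" by simp
  then have "enc us = enc (butlast us) @ A # last us" by (metis enc_append enc_Cons enc_Nil append_Nil2)
  then show ?thesis by simp
qed

lemma cnd_pos:
  assumes af: "AF us" and j: "j < length us"
  defines "w \<equiv> enc us"
  defines "p \<equiv> apos w ! j"
  shows "(0 < p \<and> Suc p < length w \<and> w ! (p - 1) = C \<and> w ! Suc p = B)
     = (0 < j \<and> eC (us ! (j - 1)) \<and> sB (us ! j))"
proof -
  define L where "L = length (enc (take j us))"
  define u where "u = us ! j"
  define R where "R = enc (drop (Suc j) us)"
  have wsplit: "w = enc (take j us) @ A # (u @ R)" unfolding w_def u_def R_def by (rule enc_split[OF j])
  have pL: "p = L" unfolding p_def w_def L_def using apos_enc_nth[OF af j] .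
  have p0: "(0 < p) = (0 < j)" using j by (auto simp: pL L_def)
  have s1: "(Suc p < length w \<and> w ! Suc p = B) = sB u"
  proof -
    have "Suc p < length w = (u @ R \<noteq> [])" using wsplit pL L_def by simp
    moreover have "u @ R \<noteq> [] \<Longrightarrow> w ! Suc p = hd (u @ R)" using wsplit pL L_def
      by (simp add: nth_append hd_conv_nth)
    moreover have "(u @ R \<noteq> [] \<and> hd (u @ R) = B) = sB u"
      using enc_start[of "drop (Suc j) us"] unfolding R_def sB_def by (cases u) auto
    ultimately show ?thesis by auto
  qed
  have s2: "0 < j \<Longrightarrow> (w ! (p - 1) = C) = eC (us ! (j - 1))"
  proof -
    assume j0: "0 < j"
    then have ne: "take j us \<noteq> []" using j by (cases us) auto
    have "w ! (p - 1) = last (enc (take j us))" using wsplit pL L_def ne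
      by (simp add: nth_append last_conv_nth)
    also have "\<dots> = (if last (take j us) = [] then A else last (last (take j us)))" by (rule last_enc[OF ne])
    also have "last (take j us) = us ! (j - 1)" using j j0 by (cases j) (auto simp: take_Suc_conv_app_nth)
    finally show ?thesis by (auto simp: eC_def)
  qed
  show ?thesis using p0 s1 s2 u_def by auto
qed

definition cnd :: "letter list list \<Rightarrow> letter list list \<Rightarrow> bool" where
  "cnd us ts = (\<forall>j<length us. (0 < j \<and> eC (us ! (j - 1)) \<and> sB (us ! j)) \<longrightarrow> B \<in> set (ts ! (length us - Suc j)))"

lemma reindex: "(\<forall>i<k. P (k - Suc i) i) = (\<forall>j<k. P j (k - Suc j))"
proof
  assume h: "\<forall>i<k. P (k - Suc i) i"
  show "\<forall>j<k. P j (k - Suc j)"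
  proof (intro allI impI)
    fix j assume "j < k"
    then have "k - Suc j < k" "k - Suc (k - Suc j) = j" by auto
    then show "P j (k - Suc j)" using h by metis
  qed
next
  assume h: "\<forall>j<k. P j (k - Suc j)"
  show "\<forall>i<k. P (k - Suc i) i"
  proof (intro allI impI)
    fix i assume "i < k"
    then have "k - Suc i < k" "k - Suc (k - Suc i) = i" by auto
    then show "P (k - Suc i) i" using h by metis
  qed
qed

lemma cond_iv_enc:
  assumes afu: "AF us" and aft: "AF ts" and len: "length us = length ts"
  shows "cond_iv (enc us) (enc ts) = cnd us ts"
proof -
  define k where "k = length us"
  have la: "length (apos (enc us)) = k" using length_apos_enc[OF afu] k_def by simp
  have "cond_iv (enc us) (enc ts) = (\<forall>i<k.
       (0 < apos (enc us) ! (k - Suc i) \<and> Suc (apos (enc us) ! (k - Suc i)) < length (enc us)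
        \<and> enc us ! (apos (enc us) ! (k - Suc i) - 1) = C \<and> enc us ! Suc (apos (enc us) ! (k - Suc i)) = B)
       \<longrightarrow> B \<in> set (ts ! i))"
    unfolding cond_iv_def Let_def la
    apply (rule all_cong)
    using segment_enc[OF aft] len k_def by (simp add: rev_nth la)
  also have "\<dots> = (\<forall>i<k. (0 < k - Suc i \<and> eC (us ! (k - Suc i - 1)) \<and> sB (us ! (k - Suc i))) \<longrightarrow> B \<in> set (ts ! i))"
    apply (rule all_cong)
    using cnd_pos[OF afu, of "k - Suc _"] k_def by auto
  also have "\<dots> = cnd us ts"
    unfolding cnd_def k_def[symmetric]
    using reindex[of k "\<lambda>j i. (0 < j \<and> eC (us ! (j - 1)) \<and> sB (us ! j)) \<longrightarrow> B \<in> set (ts ! i)"] by simp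
  finally show ?thesis .
qed




lemma alg:
  fixes x w n p q :: "'a::idom"
  defines "a \<equiv> 1 - 3*x + x^2" and "b \<equiv> 1 - 2*x"
  assumes hw: "w * a = 1" and hn: "n * b = 1"
  and hp: "p = x^2*w*w + (x^2*w*w - x^2*(x*w)*n) * p + x^2*(x*w)*n * q"
  and hq: "q = x^2*(w - x*w)*w + (x^2*(w - x*w)*w - x^2*(x*w - x^2*w)*n) * p + x^2*(x*w - x^2*w)*n * q"
  and nz: "a*a*b \<noteq> 0"
  shows "p * (x^6 - 5*x^5 + 14*x^4 - 26*x^3 + 22*x^2 - 8*x + 1) = x^2 * (1 - 2*x)"
proof -
  have e1: "a*a*b * (x^2*w*w + (x^2*w*w - x^2*(x*w)*n) * p + x^2*(x*w)*n * q)
      = x^2*b*(w*a)^2 + (x^2*b*(w*a)^2 - x^3*a*(w*a)*(n*b)) * p + x^3*a*(w*a)*(n*b)*q"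
    by algebra
  have s1: "(a*a*b - x^2*b + x^3*a) * p - x^3*a*q = x^2*b"
  proof -
    have "a*a*b*p = x^2*b + (x^2*b - x^3*a) * p + x^3*a*q"
      using e1 hp[symmetric] hw hn by simp
    then show ?thesis by algebra
  qed
  have e2: "a*a*b * (x^2*(w - x*w)*w + (x^2*(w - x*w)*w - x^2*(x*w - x^2*w)*n) * p + x^2*(x*w - x^2*w)*n * q)
      = x^2*(1-x)*b*(w*a)^2 + (x^2*(1-x)*b*(w*a)^2 - x^3*(1-x)*a*(w*a)*(n*b)) * p + x^3*(1-x)*a*(w*a)*(n*b)*q"
    by algebra
  have s2: "- (x^2*(1-x)*b - x^3*(1-x)*a) * p + (a*a*b - x^3*(1-x)*a) * q = x^2*(1-x)*b"
  proof -
    have "a*a*b*q = x^2*(1-x)*b + (x^2*(1-x)*b - x^3*(1-x)*a) * p + x^3*(1-x)*a*q"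
      using e2 hq[symmetric] hw hn by simp
    then show ?thesis by algebra
  qed
  have s3: "p * ((a*a*b - x^2*b + x^3*a) * (a*a*b - x^3*(1-x)*a) - x^3*a * (x^2*(1-x)*b - x^3*(1-x)*a))
     = (a*a*b - x^3*(1-x)*a) * ((a*a*b - x^2*b + x^3*a) * p - x^3*a*q)
       + x^3*a * (- (x^2*(1-x)*b - x^3*(1-x)*a) * p + (a*a*b - x^3*(1-x)*a) * q)"
    by algebra
  have s4: "(a*a*b - x^2*b + x^3*a) * (a*a*b - x^3*(1-x)*a) - x^3*a * (x^2*(1-x)*b - x^3*(1-x)*a)
     = a*a*b * (x^6 - 5*x^5 + 14*x^4 - 26*x^3 + 22*x^2 - 8*x + 1)"
    unfolding a_def b_def by algebra
  have s5: "(a*a*b - x^3*(1-x)*a) * (x^2*b) + x^3*a * (x^2*(1-x)*b) = a*a*b * (x^2 * (1 - 2*x))"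
    unfolding b_def by algebra
  have "a*a*b * (p * (x^6 - 5*x^5 + 14*x^4 - 26*x^3 + 22*x^2 - 8*x + 1)) = a*a*b * (x^2 * (1 - 2*x))"
    using s3 s4 s5 s1 s2 by (simp add: mult.commute mult.left_commute)
  then show ?thesis using nz by simp
qed


lemma good_enc:
  assumes afu: "AF us" and aft: "AF ts" and len: "length us = length ts"
  shows "good_pair n (enc us) (enc ts) = (us \<noteq> [] \<and> length (enc us) + length (enc ts) = n
     \<and> (\<forall>u\<in>set us. no_CB u) \<and> (\<forall>t\<in>set ts. no_CB t) \<and> cnd us ts)"
proof -
  have hd1: "us \<noteq> [] \<Longrightarrow> hd (enc us) = A" by (cases us) auto
  have hd2: "ts \<noteq> [] \<Longrightarrow> hd (enc ts) = A" by (cases ts) auto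
  have tn: "(ts \<noteq> []) = (us \<noteq> [])" using len by auto
  show ?thesis
    unfolding good_pair_def count_enc[OF afu] count_enc[OF aft] no_CB_enc cond_iv_enc[OF afu aft len]
    using hd1 hd2 tn len by auto
qed

definition phi :: "blk list \<Rightarrow> letter list \<times> letter list" where
  "phi bs = (enc (rev (map fst bs)), enc (map snd bs))"

lemma length_enc_rev: "length (enc (rev us)) = length (enc us)"
  by (induction us) (simp_all add: enc_append)

lemma len_phi: "length (enc (rev (map fst bs))) + length (enc (map snd bs)) = lsz bs"
  unfolding length_enc_rev by (induction bs) (auto simp: lsz_def bsz_def)

lemma cnd_okc: "cnd (rev (map fst bs)) (map snd bs) = okc bs"
proof -
  define k where "k = length bs"
  have "cnd (rev (map fst bs)) (map snd bs) = (\<forall>j<k. (0 < j \<and> eC (fst (bs ! (k - j))) \<and> sB (fst (bs ! (k - Suc j))))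
          \<longrightarrow> B \<in> set (snd (bs ! (k - Suc j))))"
    unfolding cnd_def
    apply (simp add: k_def[symmetric])
    apply (rule all_cong)
    apply (auto simp: rev_nth k_def)
    done
  also have "\<dots> = (\<forall>i<k. (0 < k - Suc i \<and> eC (fst (bs ! (k - (k - Suc i)))) \<and> sB (fst (bs ! i)))
          \<longrightarrow> B \<in> set (snd (bs ! i)))"
    using reindex[of k "\<lambda>j i. (0 < j \<and> eC (fst (bs ! (k - j))) \<and> sB (fst (bs ! i))) \<longrightarrow> B \<in> set (snd (bs ! i))"]
    by simp
  also have "\<dots> = (\<forall>i<k. (Suc i < k \<and> eC (fst (bs ! Suc i)) \<and> sB (fst (bs ! i)))
          \<longrightarrow> B \<in> set (snd (bs ! i)))"
    apply (rule all_cong)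
    apply (subgoal_tac "k - (k - Suc i) = Suc i")
     apply auto
    done
  also have "\<dots> = okc bs" unfolding okc_def forb_def k_def by auto
  finally show ?thesis .
qed

lemma AF_VP: "bs \<in> VP \<Longrightarrow> AF (rev (map fst bs)) \<and> AF (map snd bs)"
  by (auto simp: VP_def BB_def WW_def AF_def)

lemma phi_inj: "inj_on phi VP"
proof (rule inj_onI)
  fix bs bs' assume h: "bs \<in> VP" "bs' \<in> VP" "phi bs = phi bs'"
  have "rev (map fst bs) = rev (map fst bs')"
    using AF_VP[OF h(1)] AF_VP[OF h(2)] h(3) by (intro enc_inj) (auto simp: phi_def)
  moreover have "map snd bs = map snd bs'"
    using AF_VP[OF h(1)] AF_VP[OF h(2)] h(3) by (intro enc_inj) (auto simp: phi_def)
  ultimately show "bs = bs'" by (metis rev_rev_ident zip_map_fst_snd)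
qed

lemma good_set: "{(w, z). good_pair n w z} = phi ` {bs\<in>VP. lsz bs = n}"
proof (intro set_eqI iffI)
  fix p assume "p \<in> {(w, z). good_pair n w z}"
  then obtain w z where p: "p = (w, z)" and g: "good_pair n w z" by auto
  obtain us where us: "AF us" "w = enc us" using enc_surj g unfolding good_pair_def by blast
  obtain ts where ts: "AF ts" "z = enc ts" using enc_surj g unfolding good_pair_def by blast
  have len: "length us = length ts" using g us ts count_enc unfolding good_pair_def by metis
  define bs where "bs = zip (rev us) ts"
  have m1: "map fst bs = rev us" using len by (simp add: bs_def)
  have m2: "map snd bs = ts" using len by (simp add: bs_def)
  have G: "us \<noteq> [] \<and> length (enc us) + length (enc ts) = n
     \<and> (\<forall>u\<in>set us. no_CB u) \<and> (\<forall>t\<in>set ts. no_CB t) \<and> cnd us ts"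
    using g us ts good_enc[OF us(1) ts(1) len] by simp
  have "bs \<noteq> []" using G len by (simp add: bs_def) (metis length_0_conv length_rev)
  moreover have "set bs \<subseteq> BB"
  proof
    fix b assume "b \<in> set bs"
    then have "(fst b, snd b) \<in> set (zip (rev us) ts)" by (simp add: bs_def)
    then have "fst b \<in> set us" "snd b \<in> set ts"
      using set_zip_leftD[of "fst b" "snd b" "rev us" ts] set_zip_rightD[of "fst b" "snd b" "rev us" ts] by auto
    then show "b \<in> BB" using us ts G by (auto simp: BB_def WW_def AF_def mem_Times_iff)
  qed
  moreover have "okc bs" using G cnd_okc[of bs] m1 m2 by simp
  moreover have "lsz bs = n" using G len_phi[of bs] m1 m2 by simp
  moreover have "phi bs = p" using p us ts m1 m2 by (simp add: phi_def)
  ultimately show "p \<in> phi ` {bs\<in>VP. lsz bs = n}" unfolding VP_def by blast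
next
  fix p assume "p \<in> phi ` {bs\<in>VP. lsz bs = n}"
  then obtain bs where bs: "bs \<in> VP" "lsz bs = n" "p = phi bs" by blast
  have af: "AF (rev (map fst bs))" "AF (map snd bs)" using AF_VP[OF bs(1)] by auto
  have "good_pair n (enc (rev (map fst bs))) (enc (map snd bs))"
    unfolding good_enc[OF af, simplified]
    using bs len_phi[of bs] cnd_okc[of bs]
    by (auto simp: VP_def BB_def WW_def)
  then show "p \<in> {(w, z). good_pair n w z}" using bs by (simp add: phi_def)
qed

lemma h_eq: "h n = card {bs\<in>VP. lsz bs = n}"
proof -
  have "inj_on phi {bs\<in>VP. lsz bs = n}" using phi_inj by (rule inj_on_subset) auto
  then show ?thesis unfolding h_def good_set by (rule card_image)
qed

lemma lsz_ge2: "bs \<in> VP \<Longrightarrow> 2 \<le> lsz bs"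
  by (cases bs) (auto simp: VP_def lsz_def bsz_def)

lemma H_Pf: "Abs_fps (\<lambda>n. if 2 \<le> n then of_nat (h n) else 0 :: rat) = Pf"
proof (rule fps_ext)
  fix n
  show "Abs_fps (\<lambda>n. if 2 \<le> n then of_nat (h n) else 0 :: rat) $ n = Pf $ n"
  proof (cases "2 \<le> n")
    case True then show ?thesis by (simp add: Pf_def gf_nth h_eq)
  next
    case False
    then have e: "{bs\<in>VP. lsz bs = n} = {}" using lsz_ge2 by fastforce
    have "Pf $ n = 0" unfolding Pf_def gf_nth e by simp
    then show ?thesis using False by simp
  qed
qed

theorem theorem3p3:
  shows "Abs_fps (\<lambda>n. if 2 \<le> n then of_nat (h n) else 0 :: rat)
    = fps_X ^ 2 * (1 - 2 * fps_X) /
      (fps_X ^ 6 - 5 * fps_X ^ 5 + 14 * fps_X ^ 4 - 26 * fps_X ^ 3 + 22 * fps_X ^ 2 - 8 * fps_X + 1)"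
proof -
  let ?D = "fps_X ^ 6 - 5 * fps_X ^ 5 + 14 * fps_X ^ 4 - 26 * fps_X ^ 3 + 22 * fps_X ^ 2 - 8 * fps_X + 1 :: rat fps"
  have nz: "(1 - 3 * fps_X + fps_X ^ 2) * (1 - 3 * fps_X + fps_X ^ 2) * (1 - 2 * fps_X) \<noteq> (0 :: rat fps)"
  proof -
    have "((1 - 3 * fps_X + fps_X ^ 2) * (1 - 3 * fps_X + fps_X ^ 2) * (1 - 2 * fps_X) :: rat fps) $ 0 = 1" by simp
    then show ?thesis by (metis fps_zero_nth one_neq_zero)
  qed
  have Dnz: "?D \<noteq> 0"
  proof
    assume "?D = 0"
    then have "?D $ 0 = 0" by simp
    then show False by simp
  qed
  have "Pf * ?D = fps_X ^ 2 * (1 - 2 * fps_X)"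
    by (rule alg[OF Wf_eq Nf_eq Pf_eq Qf_eq nz])
  then have "fps_X ^ 2 * (1 - 2 * fps_X) / ?D = Pf"
    using fps_divide_times_eq[OF Dnz, of Pf] by simp
  then show ?thesis using H_Pf by simp
qed



end
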